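(* Let $(\mathfrak{g},[\cdot,\cdot],\langle\cdot,\cdot\rangle)$ be a quadratic Lie algebra. If $\mathfrak{g}$ admits a symplectic form, i.e. a nondegenerate 2-cocycle $\theta\in\wedge^2\mathfrak{g}^*$, then $\mathfrak{g}$ is nilpotent.
   Context: A quadratic Lie algebra is a finite-dimensional real Lie algebra $\mathfrak{g}$ endowed with a nondegenerate symmetric bilinear form $\langle\cdot,\cdot\rangle$ which is invariant: $\langle [u,v],w\rangle+\langle [u,w],v\rangle=0$ for all $u,v,w\in\mathfrak{g}$. A 2-form $\theta\in\wedge^2\mathfrak{g}^*$ is a 2-cocycle if $\theta([u,v],w)+\theta([v,w],u)+\theta([w,u],v)=0$ for all $u,v,w\in\mathfrak{g}$. *)

theory Defs
  imports "HOL-Analysis.Analysis"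
begin

definition lie_algebra :: "('a::euclidean_space \<Rightarrow> 'a \<Rightarrow> 'a) \<Rightarrow> bool" where
  "lie_algebra br \<longleftrightarrow> bilinear br \<and> (\<forall>x. br x x = 0) \<and>
     (\<forall>x y z. br x (br y z) + br y (br z x) + br z (br x y) = 0)"

definition nondegenerate_form :: "('a::real_vector \<Rightarrow> 'a \<Rightarrow> real) \<Rightarrow> bool" where
  "nondegenerate_form B \<longleftrightarrow> (\<forall>u. (\<forall>v. B u v = 0) \<longrightarrow> u = 0)"

definition quadratic_lie_algebra ::
    "('a::euclidean_space \<Rightarrow> 'a \<Rightarrow> 'a) \<Rightarrow> ('a \<Rightarrow> 'a \<Rightarrow> real) \<Rightarrow> bool" where
  "quadratic_lie_algebra br B \<longleftrightarrow> lie_algebra br \<and> bilinear B \<and>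
     (\<forall>u v. B u v = B v u) \<and> nondegenerate_form B \<and>
     (\<forall>u v w. B (br u v) w + B (br u w) v = 0)"

definition two_cocycle ::
    "('a::euclidean_space \<Rightarrow> 'a \<Rightarrow> 'a) \<Rightarrow> ('a \<Rightarrow> 'a \<Rightarrow> real) \<Rightarrow> bool" where
  "two_cocycle br \<theta> \<longleftrightarrow> bilinear \<theta> \<and> (\<forall>u. \<theta> u u = 0) \<and>
     (\<forall>u v w. \<theta> (br u v) w + \<theta> (br v w) u + \<theta> (br w u) v = 0)"

definition symplectic_form ::
    "('a::euclidean_space \<Rightarrow> 'a \<Rightarrow> 'a) \<Rightarrow> ('a \<Rightarrow> 'a \<Rightarrow> real) \<Rightarrow> bool" where
  "symplectic_form br \<theta> \<longleftrightarrow> two_cocycle br \<theta> \<and> nondegenerate_form \<theta>"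

fun lower_central :: "('a::euclidean_space \<Rightarrow> 'a \<Rightarrow> 'a) \<Rightarrow> nat \<Rightarrow> 'a set" where
  "lower_central br 0 = UNIV"
| "lower_central br (Suc k) = span {br x y | x y. y \<in> lower_central br k}"

definition nilpotent_lie :: "('a::euclidean_space \<Rightarrow> 'a \<Rightarrow> 'a) \<Rightarrow> bool" where
  "nilpotent_lie br \<longleftrightarrow> (\<exists>k. lower_central br k = {0})"

end

theory Submission
  imports Defs "HOL-Computational_Algebra.Fundamental_Theorem_Algebra"
begin


locale graded_lie =
  fixes br :: "'v::euclidean_space \<Rightarrow> 'v \<Rightarrow> 'v" and V :: "complex \<Rightarrow> 'v set"
  assumes bil: "bilinear br"
    and alt: "\<And>x. br x x = 0"
    and leib: "\<And>a b c. br a (br b c) = br (br a b) c + br b (br a c)"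
    and subV: "\<And>c. subspace (V c)"
    and brV: "\<And>x y a b. x \<in> V a \<Longrightarrow> y \<in> V b \<Longrightarrow> br x y \<in> V (a + b)"
    and V0: "V 0 = {0}"
    and finV: "finite {c. V c \<noteq> {0}}"
    and spanV: "span (\<Union>c. V c) = UNIV"
begin

definition H where "H = (\<Union>c. V c)"

lemma antisym: "br x y = - br y x"
proof -
  have "br (x+y) (x+y) = 0" by (rule alt)
  then have "br x x + br x y + br y x + br y y = 0"
    by (simp add: bilinear_ladd[OF bil] bilinear_radd[OF bil] algebra_simps)
  then show ?thesis by (simp add: alt eq_neg_iff_add_eq_0)
qed

lemma zero_H: "0 \<in> H"
  unfolding H_def using V0 by auto

lemma bil_span:
  assumes C: "subspace C" and AB: "\<And>x y. x \<in> A \<Longrightarrow> y \<in> B \<Longrightarrow> br x y \<in> C"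
    and x: "x \<in> span A" and y: "y \<in> span B"
  shows "br x y \<in> C"
proof -
  have s1: "subspace {y. br a y \<in> C}" for a
    using C unfolding subspace_def
    by (simp add: bilinear_rzero[OF bil] bilinear_radd[OF bil] bilinear_rmul[OF bil])
  have s2: "subspace {x. \<forall>y\<in>span B. br x y \<in> C}"
    using C unfolding subspace_def
    by (simp add: bilinear_lzero[OF bil] bilinear_ladd[OF bil] bilinear_lmul[OF bil])
  have "A \<subseteq> {x. \<forall>y\<in>span B. br x y \<in> C}"
  proof
    fix a assume a: "a \<in> A"
    have "span B \<subseteq> {y. br a y \<in> C}"
      by (rule span_minimal) (use AB a s1 in auto)
    then show "a \<in> {x. \<forall>y\<in>span B. br x y \<in> C}" by auto
  qed
  then have "span A \<subseteq> {x. \<forall>y\<in>span B. br x y \<in> C}"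
    by (rule span_minimal[OF _ s2])
  then show ?thesis using x y by auto
qed

definition graded :: "'v set \<Rightarrow> bool" where
  "graded X \<longleftrightarrow> subspace X \<and> X \<subseteq> span (X \<inter> H)"

lemma Vpow_zero:
  assumes y: "y \<in> V c" and y0: "y \<noteq> 0" and m: "m \<in> V b"
  shows "\<exists>j. ((br y) ^^ j) m = 0"
proof -
  have c0: "c \<noteq> 0" using y y0 V0 by auto
  have inV: "((br y) ^^ j) m \<in> V (b + of_nat j * c)" for j
  proof (induction j)
    case 0 then show ?case using m by simp
  next
    case (Suc j)
    have "br y (((br y) ^^ j) m) \<in> V (c + (b + of_nat j * c))" by (rule brV[OF y Suc])
    then show ?case by (simp add: algebra_simps)
  qed
  have "inj (\<lambda>j::nat. b + of_nat j * c)"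
    using c0 by (auto simp: inj_def)
  then have "infinite (range (\<lambda>j::nat. b + of_nat j * c))"
    using finite_imageD by blast
  then obtain j where "b + of_nat j * c \<notin> {c. V c \<noteq> {0}}"
    using finV by (metis (no_types, lifting) finite_subset image_subset_iff subsetI)
  then have "V (b + of_nat j * c) = {0}" by auto
  then show ?thesis using inV by blast
qed

lemma graded_span_H:
  assumes "graded M" "\<not> M \<subseteq> U" "subspace U"
  shows "\<exists>m. m \<in> M \<and> m \<in> H \<and> m \<notin> U"
proof (rule ccontr)
  assume "\<not> ?thesis"
  then have "M \<inter> H \<subseteq> U" by auto
  then have "span (M \<inter> H) \<subseteq> U" using assms(3) by (rule span_minimal)
  then show False using assms(1,2) unfolding graded_def by auto
qed

lemma engel:
  assumes "graded K" "graded M" "graded U" "U \<subseteq> M" "\<not> M \<subseteq> U"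
   "\<forall>k\<in>K. \<forall>k'\<in>K. br k k' \<in> K" "\<forall>k\<in>K. \<forall>m\<in>M. br k m \<in> M"
   "\<forall>k\<in>K. \<forall>u\<in>U. br k u \<in> U"
  shows "\<exists>m. m \<in> M \<and> m \<in> H \<and> m \<notin> U \<and> (\<forall>k\<in>K. br k m \<in> U)"
  using assms
proof (induction "dim K" arbitrary: K M U rule: less_induct)
  case less
  note IH = less.hyps
  have sU: "subspace U" using less.prems(3) unfolding graded_def by auto
  have sK: "subspace K" using less.prems(1) unfolding graded_def by auto
  show ?case
  proof (cases "K \<subseteq> {0}")
    case True
    obtain m where "m \<in> M" "m \<in> H" "m \<notin> U"
      using graded_span_H[OF less.prems(2) less.prems(5) sU] by blast
    moreover have "\<forall>k\<in>K. br k m \<in> U"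
      using True subspace_0[OF sU] by (auto simp: bilinear_lzero[OF bil])
    ultimately show ?thesis by blast
  next
    case False
    define P where "P = (\<lambda>K'. graded K' \<and> K' \<subseteq> K \<and> K' \<noteq> K \<and> (\<forall>k\<in>K'. \<forall>k'\<in>K'. br k k' \<in> K'))"
    have P0: "P {0}"
      unfolding P_def graded_def using False subspace_0[OF sK]
      by (auto simp: span_zero alt)
    have "\<forall>y. P y \<longrightarrow> dim y < DIM('v) + 1"
      using dim_subset_UNIV by (metis less_add_one order_le_less_trans)
    then obtain K' where PK': "P K'" and maxK': "\<And>K''. P K'' \<Longrightarrow> dim K'' \<le> dim K'"
      using ex_has_greatest_nat[of P "{0}" dim "DIM('v)+1"] P0 by blast
    have gK': "graded K'" and K'K: "K' \<subseteq> K" "K' \<noteq> K" and subK': "\<forall>k\<in>K'. \<forall>k'\<in>K'. br k k' \<in> K'"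
      using PK' unfolding P_def by auto
    have sK': "subspace K'" using gK' unfolding graded_def by auto
    have dimlt: "dim K' < dim K"
      using K'K sK sK' by (metis dim_psubset psubsetI span_eq_iff)
    obtain y where y: "y \<in> K" "y \<in> H" "y \<notin> K'" "\<forall>k\<in>K'. br k y \<in> K'"
    proof -
      have a1: "\<not> K \<subseteq> K'" using K'K by blast
      have a2: "\<forall>k\<in>K'. \<forall>m\<in>K. br k m \<in> K" using K'K(1) less.prems(6) by blast
      show ?thesis using IH[OF dimlt gK' less.prems(1) gK' K'K(1) a1 subK' a2 subK'] that by blast
    qed
    define K'' where "K'' = span (insert y K')"
    have K''K: "K'' \<subseteq> K" unfolding K''_def by (rule span_minimal) (use y K'K sK in auto)
    have brK'': "\<forall>k\<in>K''. \<forall>k'\<in>K''. br k k' \<in> K''"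
    proof (intro ballI)
      fix k k' assume kk: "k \<in> K''" "k' \<in> K''"
      have "br k k' \<in> K'"
      proof (rule bil_span[OF sK' _ kk[unfolded K''_def]])
        fix a b assume ab: "a \<in> insert y K'" "b \<in> insert y K'"
        show "br a b \<in> K'"
        proof (cases "a = y")
          case True
          show ?thesis
          proof (cases "b = y")
            case True then show ?thesis using \<open>a = y\<close> alt subspace_0[OF sK'] by simp
          next
            case False
            then have "b \<in> K'" using ab by auto
            then have "br b y \<in> K'" using y by auto
            then show ?thesis using \<open>a = y\<close> antisym[of y b] subspace_neg[OF sK'] by metis
          qed
        next
          case False
          then have "a \<in> K'" using ab by auto
          then show ?thesis using ab subK' y by auto
        qed
      qed
      then show "br k k' \<in> K''" unfolding K''_def by (meson span_base span_mono subset_insertI subsetD)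
    qed
    have gK'': "graded K''"
      unfolding graded_def K''_def
    proof
      show "subspace (span (insert y K'))" by simp
      have "insert y K' \<subseteq> span (span (insert y K') \<inter> H)"
      proof
        fix x assume "x \<in> insert y K'"
        then show "x \<in> span (span (insert y K') \<inter> H)"
        proof
          assume "x = y" then show ?thesis using y(2) by (simp add: span_base)
        next
          assume x: "x \<in> K'"
          then have "x \<in> span (K' \<inter> H)" using gK' unfolding graded_def by auto
          moreover have "K' \<inter> H \<subseteq> span (insert y K') \<inter> H" by (auto simp: span_base)
          ultimately show ?thesis using span_mono by blast
        qed
      qed
      then show "span (insert y K') \<subseteq> span (span (insert y K') \<inter> H)"
        by (simp add: span_minimal)
    qed
    have "dim K'' > dim K'"
    proof -
      have "span K' \<subset> span (insert y K')"
        using y(3) sK' by (metis insertI1 psubsetI span_base span_eq_iff span_mono subset_insertI)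
      then show ?thesis unfolding K''_def dim_span by (rule dim_psubset)
    qed
    then have "\<not> P K''" using maxK' by fastforce
    then have K''eq: "K'' = K" using gK'' K''K brK'' unfolding P_def by blast
    obtain m0 where m0: "m0 \<in> M" "m0 \<in> H" "m0 \<notin> U" "\<forall>k\<in>K'. br k m0 \<in> U"
      using IH[OF dimlt gK' less.prems(2) less.prems(3) less.prems(4) less.prems(5)] K'K(1)
        less.prems(7,8) subK' by blast
    define ms where "ms j = ((br y) ^^ j) m0" for j
    have ms_prop: "ms j \<in> M \<and> ms j \<in> H \<and> (\<forall>k\<in>K'. br k (ms j) \<in> U)" for j
    proof (induction j)
      case 0 then show ?case using m0 by (simp add: ms_def)
    next
      case (Suc j)
      have eq: "ms (Suc j) = br y (ms j)" by (simp add: ms_def)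
      have "ms (Suc j) \<in> M" using eq Suc less.prems(7) y(1) by auto
      moreover have "ms (Suc j) \<in> H"
        using Suc y(2) brV unfolding eq H_def by blast
      moreover have "\<forall>k\<in>K'. br k (ms (Suc j)) \<in> U"
      proof
        fix k assume k: "k \<in> K'"
        have "br k (br y (ms j)) = br (br k y) (ms j) + br y (br k (ms j))" by (rule leib)
        moreover have "br (br k y) (ms j) \<in> U" using k y Suc by auto
        moreover have "br y (br k (ms j)) \<in> U" using k Suc less.prems(8) y(1) by auto
        ultimately show "br k (ms (Suc j)) \<in> U" using eq subspace_add[OF sU] by auto
      qed
      ultimately show ?case by blast
    qed
    obtain cy where cy: "y \<in> V cy" using y(2) unfolding H_def by auto
    obtain bm where bm: "m0 \<in> V bm" using m0(2) unfolding H_def by auto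
    have y0: "y \<noteq> 0" using y(3) subspace_0[OF sK'] by auto
    obtain j where "ms j = 0" using Vpow_zero[OF cy y0 bm] unfolding ms_def by blast
    then have ex: "\<exists>j. ms j \<in> U" using subspace_0[OF sU] by metis
    define j0 where "j0 = (LEAST j. ms j \<in> U)"
    have j0U: "ms j0 \<in> U" unfolding j0_def by (rule LeastI_ex[OF ex])
    have j0pos: "j0 \<noteq> 0" using j0U m0(3) unfolding ms_def by (metis funpow_0)
    then obtain i where i: "j0 = Suc i" using not0_implies_Suc by blast
    have iU: "ms i \<notin> U" using i unfolding j0_def by (metis Least_le lessI not_le)
    have yi: "br y (ms i) \<in> U" using j0U i by (simp add: ms_def)
    have "\<forall>k\<in>K. br k (ms i) \<in> U"
    proof
      fix k assume "k \<in> K"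
      then have "k \<in> span (insert y K')" using K''eq K''_def by auto
      moreover have "ms i \<in> span {ms i}" by (simp add: span_base)
      ultimately show "br k (ms i) \<in> U"
        by (rule bil_span[OF sU, rotated]) (use ms_prop yi in auto)
    qed
    then show ?thesis using ms_prop iU by blast
  qed
qed

primrec Uc :: "nat \<Rightarrow> 'v set" where
  "Uc 0 = {0}"
| "Uc (Suc k) = span {m. m \<in> H \<and> (\<forall>w. br w m \<in> Uc k)}"

lemma Uc_subspace: "subspace (Uc k)"
  by (cases k) auto

lemma Uc_graded: "graded (Uc k)"
proof (cases k)
  case 0 then show ?thesis by (auto simp: graded_def span_zero)
next
  case (Suc k')
  have "{m. m \<in> H \<and> (\<forall>w. br w m \<in> Uc k')} \<subseteq> Uc k \<inter> H"
    using Suc by (auto simp: span_base)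
  then have "span {m. m \<in> H \<and> (\<forall>w. br w m \<in> Uc k')} \<subseteq> span (Uc k \<inter> H)"
    by (rule span_mono)
  then show ?thesis using Suc unfolding graded_def by simp
qed

lemma Uc_br: "z \<in> Uc (Suc k) \<Longrightarrow> br w z \<in> Uc k"
proof -
  assume z: "z \<in> Uc (Suc k)"
  have w: "w \<in> span UNIV" by (simp add: span_base)
  have z': "z \<in> span {m. m \<in> H \<and> (\<forall>w. br w m \<in> Uc k)}" using z by simp
  have AB: "\<And>x y. x \<in> UNIV \<Longrightarrow> y \<in> {m. m \<in> H \<and> (\<forall>w. br w m \<in> Uc k)} \<Longrightarrow> br x y \<in> Uc k"
    by auto
  show ?thesis by (rule bil_span[OF Uc_subspace AB w z'])
qed

lemma Uc_mono: "Uc k \<subseteq> Uc (Suc k)"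
proof (induction k)
  case 0 then show ?case by (simp add: span_zero)
next
  case (Suc k)
  have "{m. m \<in> H \<and> (\<forall>w. br w m \<in> Uc k)} \<subseteq> {m. m \<in> H \<and> (\<forall>w. br w m \<in> Uc (Suc k))}"
    using Suc by auto
  then show ?case by (simp only: Uc.simps) (rule span_mono)
qed

lemma Uc_inv: "u \<in> Uc k \<Longrightarrow> br w u \<in> Uc k"
proof (cases k)
  case 0 then show "u \<in> Uc k \<Longrightarrow> br w u \<in> Uc k" by (simp add: bilinear_rzero[OF bil])
next
  case (Suc k')
  assume "u \<in> Uc k"
  then have "br w u \<in> Uc k'" using Suc Uc_br by simp
  then show ?thesis using Suc Uc_mono by auto
qed

lemma Uc_grow:
  assumes "Uc k \<noteq> UNIV"
  shows "\<exists>m. m \<in> Uc (Suc k) \<and> m \<notin> Uc k"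
proof -
  have gU: "graded UNIV" using spanV unfolding graded_def H_def by simp
  obtain m where "m \<in> H" "m \<notin> Uc k" "\<forall>w. br w m \<in> Uc k"
    using engel[OF gU gU Uc_graded, of k] assms Uc_inv by auto
  then have "m \<in> Uc (Suc k)" unfolding Uc.simps by (intro span_base) simp
  then show ?thesis using \<open>m \<notin> Uc k\<close> by blast
qed

lemma Uc_dim: "Uc k = UNIV \<or> k \<le> dim (Uc k)"
proof (induction k)
  case 0 then show ?case by simp
next
  case (Suc k)
  show ?case
  proof (cases "Uc (Suc k) = UNIV")
    case True then show ?thesis by simp
  next
    case False
    then have nU: "Uc k \<noteq> UNIV" using Uc_mono[of k] by blast
    then have kd: "k \<le> dim (Uc k)" using Suc by auto
    obtain m where m: "m \<in> Uc (Suc k)" "m \<notin> Uc k" using Uc_grow[OF nU] by blast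
    have "span (Uc k) \<subset> span (Uc (Suc k))"
      using Uc_mono[of k] m Uc_subspace by (metis psubsetI span_eq_iff)
    then have "dim (Uc k) < dim (Uc (Suc k))" by (rule dim_psubset)
    then show ?thesis using kd by simp
  qed
qed

lemma Uc_full: "Uc (DIM('v) + 1) = UNIV"
  using Uc_dim[of "DIM('v) + 1"] dim_subset_UNIV[of "Uc (DIM('v) + 1)"] by linarith

lemma lc_Uc: "j \<le> DIM('v) + 1 \<Longrightarrow> lower_central br j \<subseteq> Uc (DIM('v) + 1 - j)"
proof (induction j)
  case 0 then show ?case using Uc_full by simp
next
  case (Suc j)
  have eq: "DIM('v) + 1 - j = Suc (DIM('v) + 1 - Suc j)" using Suc.prems by simp
  have IH: "lower_central br j \<subseteq> Uc (Suc (DIM('v) + 1 - Suc j))"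
    using Suc.IH Suc.prems eq by simp
  have "{br x y | x y. y \<in> lower_central br j} \<subseteq> Uc (DIM('v) + 1 - Suc j)"
    using IH Uc_br by blast
  then show ?case by (simp only: lower_central.simps) (rule span_minimal[OF _ Uc_subspace])
qed

lemma nilpotent: "nilpotent_lie br"
proof -
  have "lower_central br (DIM('v) + 1) \<subseteq> {0}" using lc_Uc[of "DIM('v)+1"] by simp
  moreover have "0 \<in> lower_central br (DIM('v) + 1)" by (simp add: span_zero)
  ultimately show ?thesis unfolding nilpotent_lie_def by blast
qed

end



lemma linear_funpow: fixes f :: "'a::real_vector \<Rightarrow> 'a" shows "linear f \<Longrightarrow> linear (f ^^ n)"
proof (induction n)
  case 0
  have "f ^^ 0 = id" by (rule ext) simp
  then show ?case using linear_id by metis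
next
  case (Suc n)
  have eq: "f ^^ Suc n = f \<circ> (f ^^ n)" by (rule ext) simp
  show ?case unfolding eq by (rule linear_compose[OF Suc.IH[OF Suc.prems] Suc.prems])
qed

locale der_lie =
  fixes br :: "'a::euclidean_space \<Rightarrow> 'a \<Rightarrow> 'a" and D :: "'a \<Rightarrow> 'a"
  assumes lie: "lie_algebra br"
    and linD: "linear D"
    and injD: "inj D"
    and derD: "\<And>x y. D (br x y) = br (D x) y + br x (D y)"
begin

lemma bil: "bilinear br" using lie unfolding lie_algebra_def by auto
lemma alt: "br x x = 0" using lie unfolding lie_algebra_def by auto

lemma antisym: "br x y = - br y x"
proof -
  have "br (x+y) (x+y) = 0" by (rule alt)
  then have "br x x + br x y + br y x + br y y = 0"
    by (simp add: bilinear_ladd[OF bil] bilinear_radd[OF bil] algebra_simps)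
  then show ?thesis by (simp add: alt eq_neg_iff_add_eq_0)
qed

lemma leib: "br a (br b c) = br (br a b) c + br b (br a c)"
proof -
  have "br a (br b c) + br b (br c a) + br c (br a b) = 0"
    using lie unfolding lie_algebra_def by auto
  moreover have "br b (br c a) = - br b (br a c)"
    by (metis antisym bilinear_rneg[OF bil])
  moreover have "br c (br a b) = - br (br a b) c" by (rule antisym)
  ultimately show ?thesis by (simp add: algebra_simps eq_neg_iff_add_eq_0)
qed

lemmas bsimps = bilinear_ladd[OF bil] bilinear_radd[OF bil] bilinear_lmul[OF bil]
  bilinear_rmul[OF bil] bilinear_lsub[OF bil] bilinear_rsub[OF bil] bilinear_lneg[OF bil]
  bilinear_rneg[OF bil] bilinear_lzero[OF bil] bilinear_rzero[OF bil]

lemmas dsimps = linear_add[OF linD] linear_diff[OF linD] linear_scale[OF linD] linear_neg[OF linD]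
  linear_0[OF linD]

definition brC :: "'a \<times> 'a \<Rightarrow> 'a \<times> 'a \<Rightarrow> 'a \<times> 'a" where
  "brC u v = (br (fst u) (fst v) - br (snd u) (snd v), br (fst u) (snd v) + br (snd u) (fst v))"

definition cs :: "complex \<Rightarrow> 'a \<times> 'a \<Rightarrow> 'a \<times> 'a" where
  "cs c u = (Re c *\<^sub>R fst u - Im c *\<^sub>R snd u, Re c *\<^sub>R snd u + Im c *\<^sub>R fst u)"

definition DC :: "'a \<times> 'a \<Rightarrow> 'a \<times> 'a" where
  "DC u = (D (fst u), D (snd u))"

definition Lc :: "complex \<Rightarrow> 'a \<times> 'a \<Rightarrow> 'a \<times> 'a" where
  "Lc c u = DC u - cs c u"

definition Vc :: "complex \<Rightarrow> ('a \<times> 'a) set" where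
  "Vc c = {u. \<exists>n. (Lc c ^^ n) u = 0}"

lemma bil_brC: "bilinear brC"
  unfolding bilinear_def
  by (auto intro!: linearI simp: brC_def bsimps prod_eq_iff algebra_simps scaleR_add_right)

lemma alt_brC: "brC x x = 0"
  by (simp add: brC_def alt prod_eq_iff) (metis antisym add.commute add.right_inverse)

lemma leib_brC: "brC a (brC b c) = brC (brC a b) c + brC b (brC a c)"
  by (simp add: brC_def bsimps prod_eq_iff leib[of "fst a"] leib[of "snd a"] algebra_simps)

lemma lin_cs: "linear (cs c)"
  by (auto intro!: linearI simp: cs_def prod_eq_iff algebra_simps)

lemma lin_DC: "linear DC"
  by (auto intro!: linearI simp: DC_def prod_eq_iff dsimps)

lemma lin_Lc: "linear (Lc c)"
  unfolding Lc_def using linear_compose_sub[OF lin_DC lin_cs] by simp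

lemma Lc_leib: "Lc (a + b) (brC u v) = brC (Lc a u) v + brC u (Lc b v)"
  by (simp add: Lc_def brC_def cs_def DC_def prod_eq_iff bsimps dsimps derD algebra_simps)

lemma lin_Lcpow: "linear (Lc c ^^ n)"
  by (rule linear_funpow[OF lin_Lc])

lemma Lcpow_zero_mono:
  assumes "(Lc c ^^ n) u = 0" "n \<le> m" shows "(Lc c ^^ m) u = 0"
proof -
  have "m = (m - n) + n" using assms(2) by simp
  then have "(Lc c ^^ m) u = (Lc c ^^ (m - n)) ((Lc c ^^ n) u)"
    by (metis funpow_add o_apply)
  then show ?thesis using assms(1) linear_0[OF lin_Lcpow] by simp
qed

lemma subspace_Vc: "subspace (Vc c)"
  unfolding subspace_def Vc_def
proof (intro conjI allI ballI impI)
  show "0 \<in> {u. \<exists>n. (Lc c ^^ n) u = 0}" by (auto intro: exI[of _ 0])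
next
  fix x y assume x: "x \<in> {u. \<exists>n. (Lc c ^^ n) u = 0}" and y: "y \<in> {u. \<exists>n. (Lc c ^^ n) u = 0}"
  then obtain n m where n: "(Lc c ^^ n) x = 0" and m: "(Lc c ^^ m) y = 0" by auto
  have "(Lc c ^^ (n + m)) (x + y) = (Lc c ^^ (n + m)) x + (Lc c ^^ (n + m)) y"
    by (rule linear_add[OF lin_Lcpow])
  also have "\<dots> = 0" using Lcpow_zero_mono[OF n, of "n+m"] Lcpow_zero_mono[OF m, of "n+m"] by simp
  finally show "x + y \<in> {u. \<exists>n. (Lc c ^^ n) u = 0}" by auto
next
  fix r::real and x assume x: "x \<in> {u. \<exists>n. (Lc c ^^ n) u = 0}"
  then obtain n where n: "(Lc c ^^ n) x = 0" by auto
  have "(Lc c ^^ n) (r *\<^sub>R x) = r *\<^sub>R (Lc c ^^ n) x" by (rule linear_scale[OF lin_Lcpow])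
  then show "r *\<^sub>R x \<in> {u. \<exists>n. (Lc c ^^ n) u = 0}" using n by auto
qed

lemma Lcpow_brC_span:
  "(Lc (a + b) ^^ n) (brC u v) \<in> span {brC ((Lc a ^^ i) u) ((Lc b ^^ j) v) | i j. i + j = n}"
proof (induction n)
  case 0 then show ?case by (auto intro!: span_base)
next
  case (Suc n)
  let ?S = "\<lambda>n. {brC ((Lc a ^^ i) u) ((Lc b ^^ j) v) | i j. i + j = n}"
  have "Lc (a + b) ` ?S n \<subseteq> span (?S (Suc n))"
  proof
    fix z assume "z \<in> Lc (a + b) ` ?S n"
    then obtain i j where ij: "i + j = n" "z = Lc (a + b) (brC ((Lc a ^^ i) u) ((Lc b ^^ j) v))" by auto
    then have "z = brC ((Lc a ^^ Suc i) u) ((Lc b ^^ j) v) + brC ((Lc a ^^ i) u) ((Lc b ^^ Suc j) v)"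
      by (simp add: Lc_leib)
    moreover have "brC ((Lc a ^^ Suc i) u) ((Lc b ^^ j) v) \<in> span (?S (Suc n))"
    proof (rule span_base, simp only: mem_Collect_eq)
      show "\<exists>i' j'. brC ((Lc a ^^ Suc i) u) ((Lc b ^^ j) v) = brC ((Lc a ^^ i') u) ((Lc b ^^ j') v) \<and> i' + j' = Suc n"
        by (rule exI[of _ "Suc i"], rule exI[of _ j]) (use ij in simp)
    qed
    moreover have "brC ((Lc a ^^ i) u) ((Lc b ^^ Suc j) v) \<in> span (?S (Suc n))"
    proof (rule span_base, simp only: mem_Collect_eq)
      show "\<exists>i' j'. brC ((Lc a ^^ i) u) ((Lc b ^^ Suc j) v) = brC ((Lc a ^^ i') u) ((Lc b ^^ j') v) \<and> i' + j' = Suc n"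
        by (rule exI[of _ i], rule exI[of _ "Suc j"]) (use ij in simp)
    qed
    ultimately show "z \<in> span (?S (Suc n))" by (simp add: span_add)
  qed
  then have "span (Lc (a + b) ` ?S n) \<subseteq> span (?S (Suc n))"
    by (simp add: span_minimal)
  moreover have "(Lc (a + b) ^^ Suc n) (brC u v) \<in> Lc (a + b) ` span (?S n)"
    using Suc.IH by simp
  ultimately show ?case using span_linear_image[OF lin_Lc] by blast
qed

lemma brV: "x \<in> Vc a \<Longrightarrow> y \<in> Vc b \<Longrightarrow> brC x y \<in> Vc (a + b)"
proof -
  assume "x \<in> Vc a" "y \<in> Vc b"
  then obtain p q where p: "(Lc a ^^ p) x = 0" and q: "(Lc b ^^ q) y = 0" unfolding Vc_def by auto
  have "{brC ((Lc a ^^ i) x) ((Lc b ^^ j) y) | i j. i + j = p + q} \<subseteq> {0}"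
  proof
    fix z assume "z \<in> {brC ((Lc a ^^ i) x) ((Lc b ^^ j) y) | i j. i + j = p + q}"
    then obtain i j where ij: "i + j = p + q" "z = brC ((Lc a ^^ i) x) ((Lc b ^^ j) y)" by auto
    show "z \<in> {0}"
    proof (cases "p \<le> i")
      case True
      then show ?thesis using ij Lcpow_zero_mono[OF p True] bilinear_lzero[OF bil_brC] by simp
    next
      case False
      then have "q \<le> j" using ij by simp
      then show ?thesis using ij Lcpow_zero_mono[OF q] bilinear_rzero[OF bil_brC] by simp
    qed
  qed
  then have "span {brC ((Lc a ^^ i) x) ((Lc b ^^ j) y) | i j. i + j = p + q} \<subseteq> {0}"
    by (simp add: span_minimal)
  then have "(Lc (a + b) ^^ (p + q)) (brC x y) = 0" using Lcpow_brC_span[of "p+q" a b x y] by auto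
  then show ?thesis unfolding Vc_def by auto
qed

lemma inj_DC: "inj DC"
  using injD unfolding inj_def DC_def by (auto simp: prod_eq_iff)

lemma V0: "Vc 0 = {0}"
proof -
  have L0: "Lc 0 = DC" by (auto simp: Lc_def cs_def fun_eq_iff zero_prod_def)
  have "(DC ^^ n) u = 0 \<Longrightarrow> u = 0" for n u
  proof (induction n arbitrary: u)
    case 0 then show ?case by simp
  next
    case (Suc n)
    then have "(DC ^^ n) (DC u) = 0" by (simp add: funpow_Suc_right del: funpow.simps)
    then have "DC u = 0" using Suc.IH by blast
    then show ?case using inj_DC linear_0[OF lin_DC] by (metis inj_def)
  qed
  then show ?thesis unfolding Vc_def L0 by (auto intro: exI[of _ 0])
qed

end



context der_lie begin

lemma cs_add: "cs (a + b) w = cs a w + cs b w"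
  by (simp add: cs_def prod_eq_iff algebra_simps)
lemma cs_mult: "cs (a * b) w = cs a (cs b w)"
  by (simp add: cs_def prod_eq_iff algebra_simps)
lemma cs_0[simp]: "cs 0 w = 0"
  by (simp add: cs_def zero_prod_def)
lemma cs_1[simp]: "cs 1 w = w"
  by (simp add: cs_def)
lemma cs_neg: "cs (- a) w = - cs a w"
  by (simp add: cs_def prod_eq_iff algebra_simps)
lemma cs_diff: "cs (a - b) w = cs a w - cs b w"
  by (simp add: cs_def prod_eq_iff algebra_simps)
lemma cs_of_real: "cs (of_real r) w = r *\<^sub>R w"
  by (simp add: cs_def prod_eq_iff)
lemma cs_vadd: "cs a (u + v) = cs a u + cs a v"
  by (rule linear_add[OF lin_cs])
lemma cs_vzero[simp]: "cs a 0 = 0"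
  by (rule linear_0[OF lin_cs])
lemma cs_comm: "cs a (cs b w) = cs b (cs a w)"
  by (metis cs_mult mult.commute)
lemma DC_cs: "DC (cs a w) = cs a (DC w)"
  by (simp add: cs_def DC_def prod_eq_iff dsimps)
lemma DC_0[simp]: "DC 0 = 0"
  by (rule linear_0[OF lin_DC])
lemma DC_add: "DC (u + v) = DC u + DC v"
  by (rule linear_add[OF lin_DC])
lemma cs_inv: "cs z y = 0 \<Longrightarrow> z \<noteq> 0 \<Longrightarrow> y = 0"
  by (metis cs_1 cs_mult cs_vzero left_inverse)

definition opC :: "complex poly \<Rightarrow> 'a \<times> 'a \<Rightarrow> 'a \<times> 'a" where
  "opC p = fold_coeffs (\<lambda>a f w. cs a w + DC (f w)) p (\<lambda>w. 0)"

lemma opC_0[simp]: "opC 0 w = 0"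
  by (simp add: opC_def)

lemma opC_pCons: "opC (pCons a p) w = cs a w + DC (opC p w)"
proof (cases "p = 0")
  case True
  then show ?thesis
  proof (cases "a = 0")
    case True
    then show ?thesis using \<open>p = 0\<close> by simp
  next
    case False
    then show ?thesis using \<open>p = 0\<close> by (simp add: opC_def)
  qed
next
  case False
  then show ?thesis by (simp add: opC_def)
qed

lemma lin_opC: "linear (opC p)"
proof (induction p)
  case 0
  have "opC 0 = (\<lambda>w. 0)" by (rule ext) simp
  then show ?case by (simp add: linear_zero)
next
  case (pCons a p)
  have eq: "opC (pCons a p) = (\<lambda>w. cs a w + DC (opC p w))" by (rule ext) (simp add: opC_pCons)
  show ?case unfolding eq
    by (rule linear_compose_add[OF lin_cs, of "\<lambda>w. DC (opC p w)", simplified])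
       (rule linear_compose[OF pCons.IH lin_DC, unfolded o_def])
qed

lemma opC_vzero[simp]: "opC p 0 = 0" by (rule linear_0[OF lin_opC])

lemma opC_add: "opC (p + q) w = opC p w + opC q w"
proof (induction p q rule: poly_induct2)
  case 0 then show ?case by simp
next
  case (pCons a p b q)
  then show ?case by (simp add: opC_pCons cs_add DC_add algebra_simps)
qed

lemma opC_smult: "opC (smult a p) w = cs a (opC p w)"
proof (induction p)
  case 0 then show ?case by simp
next
  case (pCons b p)
  then show ?case by (simp add: opC_pCons cs_mult DC_cs cs_vadd)
qed

lemma opC_mult: "opC (p * q) w = opC p (opC q w)"
proof (induction p)
  case 0 then show ?case by simp
next
  case (pCons a p)
  then show ?case by (simp add: opC_pCons opC_add opC_smult)
qed

lemma opC_const: "opC [:a:] w = cs a w"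
  by (simp add: opC_pCons)

lemma opC_lin: "opC [:- c, 1:] w = Lc c w"
  by (simp add: opC_pCons Lc_def cs_neg)

lemma opC_eigen:
  assumes "Lc c y = 0" shows "opC p y = cs (poly p c) y"
proof (induction p)
  case 0 then show ?case by simp
next
  case (pCons a p)
  have "DC y = cs c y" using assms by (simp add: Lc_def)
  then show ?case using pCons.IH
    by (simp add: opC_pCons DC_cs cs_add cs_mult[symmetric] mult.commute)
qed

lemma opC_sum: "opC (sum g A) w = (\<Sum>x\<in>A. opC (g x) w)"
  by (induction A rule: infinite_finite_induct) (simp_all add: opC_add)

lemma opC_monom: "opC (monom 1 i) w = (DC ^^ i) w"
proof (induction i)
  case 0 then show ?case by (simp add: monom_0 opC_const)
next
  case (Suc i) then show ?case by (simp add: monom_Suc opC_pCons)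
qed

end



context der_lie begin

lemma opC_smult_real: "opC (smult (of_real r) p) w = r *\<^sub>R opC p w"
  by (simp add: opC_smult cs_of_real)

lemma opC_diff: "opC (p - q) w = opC p w - opC q w"
proof -
  have "opC (p - q) w + opC q w = opC p w" by (metis opC_add diff_add_cancel)
  then show ?thesis by (simp add: algebra_simps)
qed

lemma annih1: "\<exists>q. q \<noteq> 0 \<and> opC q w = 0"
proof (rule ccontr)
  assume "\<not> ?thesis"
  then have nz: "\<And>q. q \<noteq> 0 \<Longrightarrow> opC q w \<noteq> 0" by blast
  define N where "N = DIM('a \<times> 'a)"
  define v where "v i = (DC ^^ i) w" for i
  have injv: "inj_on v {0..N}"
  proof (rule inj_onI)
    fix i j assume "i \<in> {0..N}" "j \<in> {0..N}" "v i = v j"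
    then have "opC (monom 1 i - monom 1 j) w = 0" by (simp add: opC_diff opC_monom v_def)
    then have "monom (1::complex) i - monom 1 j = 0" using nz by blast
    then have "coeff (monom (1::complex) i - monom 1 j) i = 0" by simp
    then show "i = j" by (cases "i = j") simp_all
  qed
  have ind: "independent (v ` {0..N})"
  proof (rule independent_if_scalars_zero)
    show "finite (v ` {0..N})" by simp
  next
    fix f x assume sum0: "(\<Sum>x\<in>v ` {0..N}. f x *\<^sub>R x) = 0" and x: "x \<in> v ` {0..N}"
    have s: "(\<Sum>i\<in>{0..N}. f (v i) *\<^sub>R v i) = 0"
    proof -
      have "(\<Sum>x\<in>v ` {0..N}. f x *\<^sub>R x) = (\<Sum>i\<in>{0..N}. f (v i) *\<^sub>R v i)"
        by (rule sum.reindex_cong[OF injv refl refl])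
      then show ?thesis using sum0 by simp
    qed
    define q where "q = (\<Sum>i\<in>{0..N}. smult (of_real (f (v i))) (monom (1::complex) i))"
    have "opC q w = (\<Sum>i\<in>{0..N}. f (v i) *\<^sub>R v i)"
      unfolding q_def by (simp add: opC_sum opC_smult_real opC_monom v_def)
    then have "opC q w = 0" using s by simp
    then have "q = 0" using nz[of q] by auto
    obtain k where k: "k \<in> {0..N}" "x = v k" using x by auto
    have "coeff q k = (\<Sum>i\<in>{0..N}. coeff (smult (of_real (f (v i))) (monom (1::complex) i)) k)"
      unfolding q_def by (rule coeff_sum)
    also have "\<dots> = (\<Sum>i\<in>{0..N}. if i = k then of_real (f (v i)) else 0)"
      by (rule sum.cong) auto
    also have "\<dots> = of_real (f (v k))" using k(1) by (simp add: sum.delta')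
    finally have "coeff q k = of_real (f (v k))" .
    then show "f x = 0" using \<open>q = 0\<close> k by simp
  qed
  have "card (v ` {0..N}) = N + 1" using card_image[OF injv] by simp
  then show False using independent_bound[OF ind] unfolding N_def by simp
qed

lemma annih: "\<exists>p. p \<noteq> 0 \<and> (\<forall>w. opC p w = 0)"
proof -
  obtain q where q: "\<And>b. q b \<noteq> 0 \<and> opC (q b) b = 0" using annih1 by metis
  define p where "p = (\<Prod>b\<in>(Basis :: ('a \<times> 'a) set). q b)"
  have p0: "p \<noteq> 0" unfolding p_def using q by (simp add: prod_zero_iff)
  have pb: "opC p b = 0" if b: "b \<in> Basis" for b
  proof -
    have "p = (\<Prod>b'\<in>Basis - {b}. q b') * q b"
      unfolding p_def using b by (simp add: prod.remove mult.commute)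
    then show ?thesis using q by (simp add: opC_mult)
  qed
  have "subspace {w. opC p w = 0}"
    using lin_opC[of p] unfolding subspace_def by (simp add: linear_add linear_scale)
  then have "span Basis \<subseteq> {w. opC p w = 0}" using pb by (intro span_minimal) auto
  then show ?thesis using p0 by auto
qed

end



context der_lie begin

lemma Lc_cs: "Lc c (cs a u) = cs a (Lc c u)"
  by (simp add: Lc_def DC_cs linear_diff[OF lin_cs] cs_comm)

lemma Lc_comm: "Lc a (Lc b u) = Lc b (Lc a u)"
  by (simp add: Lc_def linear_diff[OF lin_DC] linear_diff[OF lin_cs] DC_cs cs_comm algebra_simps)

lemma Lcpow_comm: "(Lc b ^^ n) (Lc c u) = Lc c ((Lc b ^^ n) u)"
  by (induction n) (simp_all add: Lc_comm)

lemma Lc_pres: "u \<in> Vc b \<Longrightarrow> Lc c u \<in> Vc b"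
proof -
  assume "u \<in> Vc b"
  then obtain n where n: "(Lc b ^^ n) u = 0" unfolding Vc_def by auto
  have "(Lc b ^^ n) (Lc c u) = 0" using n Lcpow_comm linear_0[OF lin_Lc] by simp
  then show ?thesis unfolding Vc_def by blast
qed

lemma Lc_shift: "Lc c u = Lc b u + cs (b - c) u"
  by (simp add: Lc_def cs_diff)

lemma Lc_ker:
  assumes "b \<noteq> c" "u \<in> Vc b" "Lc c u = 0" shows "u = 0"
proof -
  have Lb: "Lc b u = cs (c - b) u"
    using Lc_shift[of c u b] assms(3) by (simp add: cs_diff eq_neg_iff_add_eq_0 algebra_simps)
  have pw: "(Lc b ^^ n) u = cs ((c - b) ^ n) u" for n
  proof (induction n)
    case 0 then show ?case by simp
  next
    case (Suc n)
    then show ?case by (simp add: Lc_cs Lb cs_mult[symmetric] mult.commute)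
  qed
  obtain n where "(Lc b ^^ n) u = 0" using assms(2) unfolding Vc_def by auto
  then have "cs ((c - b) ^ n) u = 0" using pw by simp
  then show ?thesis using cs_inv assms(1) by simp
qed

lemma Lc_onto:
  assumes "b \<noteq> c" "x \<in> Vc b" shows "\<exists>y\<in>Vc b. Lc c y = x"
proof -
  have sub: "Lc c ` Vc b \<subseteq> Vc b" using Lc_pres by auto
  have inj: "inj_on (Lc c) (span (Vc b))"
  proof (rule inj_onI)
    fix y1 y2 assume y: "y1 \<in> span (Vc b)" "y2 \<in> span (Vc b)" "Lc c y1 = Lc c y2"
    have "y1 - y2 \<in> Vc b" using y(1,2) subspace_Vc by (simp add: span_eq_iff[THEN iffD2] subspace_diff)
    moreover have "Lc c (y1 - y2) = 0" using y(3) by (simp add: linear_diff[OF lin_Lc])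
    ultimately have "y1 - y2 = 0" using Lc_ker[OF assms(1)] by blast
    then show "y1 = y2" by simp
  qed
  have "dim (Lc c ` Vc b) = dim (Vc b)" by (rule dim_image_eq[OF lin_Lc inj])
  then have eq: "Lc c ` Vc b = Vc b"
    using subspace_dim_equal[OF linear_subspace_image[OF lin_Lc subspace_Vc] subspace_Vc sub] by simp
  have "x \<in> Lc c ` Vc b" using assms(2) by (subst eq)
  then show ?thesis by blast
qed

definition SV where "SV = span (\<Union>c. Vc c)"

lemma Lc_back:
  assumes "Lc c w \<in> SV" shows "w \<in> SV"
proof -
  define Q where "Q = {u. \<exists>y\<in>SV. u - Lc c y \<in> Vc c}"
  have Q0: "0 \<in> Q"
  proof -
    have "0 - Lc c 0 \<in> Vc c" using subspace_0[OF subspace_Vc] linear_0[OF lin_Lc] by simp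
    moreover have "(0::'a\<times>'a) \<in> SV" by (simp add: SV_def span_zero)
    ultimately show ?thesis unfolding Q_def by blast
  qed
  have Qadd: "x + y \<in> Q" if xyQ: "x \<in> Q" "y \<in> Q" for x y
  proof -
    obtain y1 y2 where "y1 \<in> SV" "x - Lc c y1 \<in> Vc c" "y2 \<in> SV" "y - Lc c y2 \<in> Vc c"
      using xyQ unfolding Q_def by blast
    moreover have "(x + y) - Lc c (y1 + y2) = (x - Lc c y1) + (y - Lc c y2)"
      by (simp add: linear_add[OF lin_Lc])
    ultimately have "(x + y) - Lc c (y1 + y2) \<in> Vc c" "y1 + y2 \<in> SV"
      using subspace_add[OF subspace_Vc] span_add unfolding SV_def by metis+
    then show ?thesis unfolding Q_def by blast
  qed
  have Qscale: "r *\<^sub>R x \<in> Q" if xQ: "x \<in> Q" for x r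
  proof -
    obtain y1 where "y1 \<in> SV" "x - Lc c y1 \<in> Vc c" using xQ unfolding Q_def by blast
    moreover have "r *\<^sub>R x - Lc c (r *\<^sub>R y1) = r *\<^sub>R (x - Lc c y1)"
      by (simp add: linear_scale[OF lin_Lc] algebra_simps)
    ultimately have "r *\<^sub>R x - Lc c (r *\<^sub>R y1) \<in> Vc c" "r *\<^sub>R y1 \<in> SV"
      using subspace_scale[OF subspace_Vc] span_scale unfolding SV_def by metis+
    then show ?thesis unfolding Q_def by blast
  qed
  have sQ: "subspace Q" unfolding subspace_def using Q0 Qadd Qscale by blast
  have "(\<Union>b. Vc b) \<subseteq> Q"
  proof
    fix u assume "u \<in> (\<Union>b. Vc b)"
    then obtain b where b: "u \<in> Vc b" by auto
    show "u \<in> Q"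
    proof (cases "b = c")
      case True
      have "u - Lc c 0 \<in> Vc c" using b True linear_0[OF lin_Lc] by simp
      moreover have "(0::'a\<times>'a) \<in> SV" by (simp add: SV_def span_zero)
      ultimately show ?thesis unfolding Q_def by blast
    next
      case False
      then obtain y where y: "y \<in> Vc b" "Lc c y = u" using Lc_onto b by blast
      then have "y \<in> SV" unfolding SV_def by (auto intro: span_base)
      moreover have "u - Lc c y \<in> Vc c" using y(2) subspace_0[OF subspace_Vc] by simp
      ultimately show ?thesis unfolding Q_def by blast
    qed
  qed
  then have "SV \<subseteq> Q" unfolding SV_def by (rule span_minimal[OF _ sQ])
  then obtain y where y: "y \<in> SV" "Lc c w - Lc c y \<in> Vc c" using assms unfolding Q_def by auto
  then have "Lc c (w - y) \<in> Vc c" by (simp add: linear_diff[OF lin_Lc])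
  then obtain n where "(Lc c ^^ n) (Lc c (w - y)) = 0" unfolding Vc_def by auto
  then have "(Lc c ^^ Suc n) (w - y) = 0" by (simp add: funpow_Suc_right del: funpow.simps)
  then have "w - y \<in> Vc c" unfolding Vc_def by blast
  then have "w - y \<in> SV" unfolding SV_def by (auto intro: span_base)
  then have "(w - y) + y \<in> SV" using y(1) unfolding SV_def by (rule span_add)
  then show ?thesis by simp
qed

lemma kernel_span: "q \<noteq> 0 \<Longrightarrow> opC q w = 0 \<Longrightarrow> w \<in> SV"
proof (induction "degree q" arbitrary: q w rule: less_induct)
  case less
  show ?case
  proof (cases "degree q = 0")
    case True
    then obtain a where qa: "q = [:a:]" using degree_0_id by metis
    have "cs a w = 0" using less.prems(2) by (simp add: qa opC_const)
    moreover have "a \<noteq> 0" using less.prems(1) qa by simp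
    ultimately have "w = 0" by (rule cs_inv)
    then show ?thesis by (simp add: SV_def span_zero)
  next
    case False
    then have "\<not> constant (poly q)" by (simp add: constant_degree)
    then obtain c where "poly q c = 0" using fundamental_theorem_of_algebra by blast
    then obtain r where r: "q = [:-c, 1:] * r" using poly_eq_0_iff_dvd by (metis dvdE)
    have r0: "r \<noteq> 0" using r less.prems(1) by auto
    have d1: "degree ([:-c, 1:] * r) = degree [:-c, 1:] + degree r"
      using r0 by (intro degree_mult_eq) auto
    have "degree q = degree [:-c, 1:] + degree r" using d1 r by (simp only:)
    then have dlt: "degree r < degree q" by simp
    have "q = r * [:-c, 1:]" using r by (simp only: mult.commute)
    then have "opC q w = opC r (opC [:-c, 1:] w)" by (simp only: opC_mult)
    then have "opC r (Lc c w) = 0" using less.prems(2) by (simp only: opC_lin)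
    then have "Lc c w \<in> SV" using less.hyps[OF dlt r0] by blast
    then show ?thesis by (rule Lc_back)
  qed
qed

lemma spanning: "span (\<Union>c. Vc c) = UNIV"
proof -
  obtain p where p: "p \<noteq> 0" "\<And>w. opC p w = 0" using annih by blast
  show ?thesis using kernel_span[OF p(1) p(2)] unfolding SV_def by auto
qed

lemma eigvec: "(Lc c ^^ n) x = 0 \<Longrightarrow> x \<noteq> 0 \<Longrightarrow> \<exists>y. y \<noteq> 0 \<and> Lc c y = 0"
proof (induction n arbitrary: x)
  case 0 then show ?case by simp
next
  case (Suc n)
  show ?case
  proof (cases "Lc c x = 0")
    case True then show ?thesis using Suc.prems by blast
  next
    case False
    have "(Lc c ^^ n) (Lc c x) = 0" using Suc.prems(1) by (simp add: funpow_Suc_right del: funpow.simps)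
    then show ?thesis using Suc.IH False by blast
  qed
qed

lemma finV: "finite {c. Vc c \<noteq> {0}}"
proof -
  obtain p where p: "p \<noteq> 0" "\<And>w. opC p w = 0" using annih by blast
  have "{c. Vc c \<noteq> {0}} \<subseteq> {c. poly p c = 0}"
  proof
    fix c assume "c \<in> {c. Vc c \<noteq> {0}}"
    then obtain x where "x \<in> Vc c" "x \<noteq> 0" using subspace_0[OF subspace_Vc] by blast
    then obtain n where "(Lc c ^^ n) x = 0" "x \<noteq> 0" unfolding Vc_def by auto
    then obtain y where y: "y \<noteq> 0" "Lc c y = 0" using eigvec by blast
    then have "cs (poly p c) y = 0" using opC_eigen[OF y(2), of p] p(2) by simp
    then show "c \<in> {c. poly p c = 0}" using cs_inv y(1) by blast
  qed
  then show ?thesis using poly_roots_finite[OF p(1)] finite_subset by blast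
qed

lemma graded_lie_inst: "graded_lie brC Vc"
proof unfold_locales
  show "bilinear brC" by (rule bil_brC)
  show "brC x x = 0" for x by (rule alt_brC)
  show "brC a (brC b c) = brC (brC a b) c + brC b (brC a c)" for a b c by (rule leib_brC)
  show "subspace (Vc c)" for c by (rule subspace_Vc)
  show "brC x y \<in> Vc (a + b)" if "x \<in> Vc a" "y \<in> Vc b" for x y a b using that by (rule brV)
  show "Vc 0 = {0}" by (rule V0)
  show "finite {c. Vc c \<noteq> {0}}" by (rule finV)
  show "span (\<Union>c. Vc c) = UNIV" by (rule spanning)
qed

lemma nilC: "nilpotent_lie brC"
  using graded_lie.nilpotent[OF graded_lie_inst] .

lemma lc_embed: "x \<in> lower_central br k \<Longrightarrow> (x, 0) \<in> lower_central brC k"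
proof (induction k arbitrary: x)
  case 0 then show ?case by simp
next
  case (Suc k)
  let ?L = "lower_central brC (Suc k)"
  have sL: "subspace ?L" by simp
  have sub: "subspace {x. (x, 0) \<in> ?L}"
    unfolding subspace_def
  proof (intro conjI allI ballI)
    show "0 \<in> {x. (x, 0) \<in> ?L}" using subspace_0[OF sL] by (simp add: zero_prod_def)
  next
    fix x y assume hx: "x \<in> {x. (x, 0) \<in> ?L}" and hy: "y \<in> {x. (x, 0) \<in> ?L}"
    have "(x, 0) + (y, 0) \<in> ?L" by (rule subspace_add[OF sL]) (use hx hy in blast)+
    then show "x + y \<in> {x. (x, 0) \<in> ?L}" by simp
  next
    fix r :: real and x assume hx: "x \<in> {x. (x, 0) \<in> ?L}"
    have "r *\<^sub>R (x, 0) \<in> ?L" by (rule subspace_scale[OF sL]) (use hx in blast)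
    then show "r *\<^sub>R x \<in> {x. (x, 0) \<in> ?L}" by simp
  qed
  have "{br a b | a b. b \<in> lower_central br k} \<subseteq> {x. (x, 0) \<in> lower_central brC (Suc k)}"
  proof
    fix z assume "z \<in> {br a b | a b. b \<in> lower_central br k}"
    then obtain a b where z: "z = br a b" "b \<in> lower_central br k" by auto
    have "brC (a, 0) (b, 0) = (z, 0)" using z by (simp add: brC_def bsimps)
    moreover have "brC (a, 0) (b, 0) \<in> lower_central brC (Suc k)"
      by (simp only: lower_central.simps(2), rule span_base) (use Suc.IH[OF z(2)] in blast)
    ultimately show "z \<in> {x. (x, 0) \<in> lower_central brC (Suc k)}" by simp
  qed
  then have "span {br a b | a b. b \<in> lower_central br k} \<subseteq> {x. (x, 0) \<in> lower_central brC (Suc k)}"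
    by (rule span_minimal[OF _ sub])
  then show ?case using Suc.prems by (simp only: lower_central.simps(2)) blast
qed

lemma nil: "nilpotent_lie br"
proof -
  obtain k where k: "lower_central brC k = {0}" using nilC unfolding nilpotent_lie_def by blast
  have "lower_central br k \<subseteq> {0}"
  proof
    fix x assume "x \<in> lower_central br k"
    then have "(x, 0) \<in> lower_central brC k" by (rule lc_embed)
    then have "(x, 0) = (0::'a\<times>'a)" using k by blast
    then show "x \<in> {0}" by (simp add: zero_prod_def)
  qed
  moreover have "0 \<in> lower_central br k" by (cases k) (simp_all add: span_zero)
  ultimately show ?thesis unfolding nilpotent_lie_def by blast
qed

end



lemma bil_repr:
  fixes F :: "'a::euclidean_space \<Rightarrow> 'a \<Rightarrow> real"
  assumes "bilinear F"
  shows "(\<Sum>b\<in>Basis. F u b *\<^sub>R b) \<bullet> v = F u v"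
proof -
  have lin: "linear (F u)" using assms unfolding bilinear_def by auto
  have "F u v = F u (\<Sum>b\<in>Basis. (v \<bullet> b) *\<^sub>R b)" by (simp add: euclidean_representation)
  also have "\<dots> = (\<Sum>b\<in>Basis. (v \<bullet> b) * F u b)"
    by (simp add: linear_sum[OF lin] linear_scale[OF lin])
  also have "\<dots> = (\<Sum>b\<in>Basis. F u b * (b \<bullet> v))"
    by (rule sum.cong) (simp_all add: inner_commute)
  also have "\<dots> = (\<Sum>b\<in>Basis. F u b *\<^sub>R b) \<bullet> v"
    by (simp add: inner_sum_left)
  finally show ?thesis by simp
qed

lemma bil_repr_linear:
  fixes F :: "'a::euclidean_space \<Rightarrow> 'a \<Rightarrow> real"
  assumes "bilinear F"
  shows "linear (\<lambda>u. \<Sum>b\<in>Basis. F u b *\<^sub>R b)"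
proof (rule linearI)
  fix x y
  show "(\<Sum>b\<in>Basis. F (x + y) b *\<^sub>R b) = (\<Sum>b\<in>Basis. F x b *\<^sub>R b) + (\<Sum>b\<in>Basis. F y b *\<^sub>R b)"
    by (simp add: bilinear_ladd[OF assms] scaleR_add_left sum.distrib)
next
  fix r x
  show "(\<Sum>b\<in>Basis. F (r *\<^sub>R x) b *\<^sub>R b) = r *\<^sub>R (\<Sum>b\<in>Basis. F x b *\<^sub>R b)"
    by (simp add: bilinear_lmul[OF assms] scaleR_sum_right)
qed

lemma repr_inj:
  fixes F :: "'a::euclidean_space \<Rightarrow> 'a \<Rightarrow> real"
  assumes "bilinear F" "nondegenerate_form F"
  shows "inj (\<lambda>u. \<Sum>b\<in>Basis. F u b *\<^sub>R b)"
proof (rule injI)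
  fix x y assume eq: "(\<Sum>b\<in>Basis. F x b *\<^sub>R b) = (\<Sum>b\<in>Basis. F y b *\<^sub>R b)"
  have "F (x - y) v = 0" for v
    using bil_repr[OF assms(1), of x v] bil_repr[OF assms(1), of y v] eq
    by (simp add: bilinear_lsub[OF assms(1)])
  then have "x - y = 0" using assms(2) unfolding nondegenerate_form_def by blast
  then show "x = y" by simp
qed

theorem mainTheorem1:
  fixes br :: "'a::euclidean_space \<Rightarrow> 'a \<Rightarrow> 'a"
    and B :: "'a \<Rightarrow> 'a \<Rightarrow> real"
  assumes "quadratic_lie_algebra br B"
    and "\<exists>\<theta>. symplectic_form br \<theta>"
  shows "nilpotent_lie br"
proof -
  obtain \<theta> where th: "symplectic_form br \<theta>" using assms(2) by blast
  have lie: "lie_algebra br" and bB: "bilinear B" and symB: "\<And>u v. B u v = B v u"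
    and ndB: "nondegenerate_form B" and invB: "\<And>u v w. B (br u v) w + B (br u w) v = 0"
    using assms(1) unfolding quadratic_lie_algebra_def by auto
  have bT: "bilinear \<theta>" and altT: "\<And>u. \<theta> u u = 0"
    and cocT: "\<And>u v w. \<theta> (br u v) w + \<theta> (br v w) u + \<theta> (br w u) v = 0"
    and ndT: "nondegenerate_form \<theta>"
    using th unfolding symplectic_form_def two_cocycle_def by auto
  define M where "M u = (\<Sum>b\<in>Basis. B u b *\<^sub>R b)" for u
  define N where "N u = (\<Sum>b\<in>Basis. \<theta> u b *\<^sub>R b)" for u
  have linM: "linear M" unfolding M_def[abs_def] by (rule bil_repr_linear[OF bB])
  have linN: "linear N" unfolding N_def[abs_def] by (rule bil_repr_linear[OF bT])
  have injM: "inj M" unfolding M_def[abs_def] by (rule repr_inj[OF bB ndB])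
  have MB: "M u \<bullet> v = B u v" for u v unfolding M_def by (rule bil_repr[OF bB])
  have NT: "N u \<bullet> v = \<theta> u v" for u v unfolding N_def by (rule bil_repr[OF bT])
  have surjM: "surj M" by (rule linear_injective_imp_surjective[OF linM injM]) simp
  obtain g where g: "linear g" "g \<circ> M = id" using linear_injective_left_inverse[OF linM injM] by blast
  have Mg: "M (g y) = y" for y
  proof -
    obtain x where "y = M x" using surjM by blast
    moreover have "g (M x) = x" using g(2) by (metis comp_apply id_apply)
    ultimately show ?thesis by simp
  qed
  define D where "D = g \<circ> N"
  have linD: "linear D" unfolding D_def by (rule linear_compose[OF linN g(1)])
  have BD: "B (D u) v = \<theta> u v" for u v
    using MB[of "D u" v] NT[of u v] Mg[of "N u"] unfolding D_def by simp
  have antiT: "\<theta> x y = - \<theta> y x" for x y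
  proof -
    have "\<theta> (x+y) (x+y) = 0" by (rule altT)
    then have "\<theta> x x + \<theta> x y + \<theta> y x + \<theta> y y = 0"
      by (simp add: bilinear_ladd[OF bT] bilinear_radd[OF bT] algebra_simps)
    then show ?thesis using altT by (simp add: eq_neg_iff_add_eq_0)
  qed
  have br_anti: "br x y = - br y x" for x y
  proof -
    have b: "bilinear br" and a: "\<And>x. br x x = 0" using lie unfolding lie_algebra_def by auto
    have "br (x+y) (x+y) = 0" by (rule a)
    then have "br x x + br x y + br y x + br y y = 0"
      by (simp add: bilinear_ladd[OF b] bilinear_radd[OF b] algebra_simps)
    then show ?thesis using a by (simp add: eq_neg_iff_add_eq_0)
  qed
  have injD: "inj D"
  proof (rule injI)
    fix x y assume "D x = D y"
    then have "D (x - y) = 0" by (simp add: linear_diff[OF linD])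
    then have "\<theta> (x - y) v = 0" for v using BD[of "x - y" v] bilinear_lzero[OF bB] by simp
    then have "x - y = 0" using ndT unfolding nondegenerate_form_def by blast
    then show "x = y" by simp
  qed
  have derD: "D (br u v) = br (D u) v + br u (D v)" for u v
  proof -
    have key: "B (D (br u v)) w = B (br (D u) v) w + B (br u (D v)) w" for w
    proof -
      have c: "\<theta> (br u v) w = - \<theta> (br v w) u - \<theta> (br w u) v"
        using cocT[of u v w] by (simp add: algebra_simps eq_neg_iff_add_eq_0)
      have t1: "\<theta> (br v w) u = - B (br (D u) v) w"
      proof -
        have "\<theta> (br v w) u = - B (D u) (br v w)" using antiT BD by metis
        also have "\<dots> = - B (br v w) (D u)" using symB by metis
        also have "\<dots> = B (br v (D u)) w" using invB[of v w "D u"] by (simp add: eq_neg_iff_add_eq_0)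
        also have "\<dots> = - B (br (D u) v) w" using br_anti[of v "D u"] bilinear_lneg[OF bB] by simp
        finally show ?thesis .
      qed
      have t2: "\<theta> (br w u) v = - B (br u (D v)) w"
      proof -
        have "\<theta> (br w u) v = - B (D v) (br w u)" using antiT BD by metis
        also have "\<dots> = - B (br w u) (D v)" using symB by metis
        also have "\<dots> = B (br u w) (D v)" using br_anti[of w u] bilinear_lneg[OF bB] by simp
        also have "\<dots> = - B (br u (D v)) w" using invB[of u w "D v"] by (simp add: eq_neg_iff_add_eq_0)
        finally show ?thesis .
      qed
      show ?thesis using BD[of "br u v" w] c t1 t2 by simp
    qed
    have "B (D (br u v) - br (D u) v - br u (D v)) w = 0" for w
      using key[of w] by (simp add: bilinear_lsub[OF bB])
    then have "D (br u v) - br (D u) v - br u (D v) = 0"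
      using ndB unfolding nondegenerate_form_def by blast
    then show ?thesis by (simp add: algebra_simps)
  qed
  interpret L: der_lie br D
    by (rule der_lie.intro[OF lie linD injD derD])
  show ?thesis by (rule L.nil)
qed


end
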